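(* Let $\varepsilon\ge0$, $\lambda=e^{\varepsilon}-1$, and let $G=(g_1,\dots,g_t)$, $G'=(g'_1,\dots,g'_t)$ be probability vectors (nonnegative entries summing to $1$). For $S\subseteq[t]$ put $$\overline H(S)=\frac{\sum_{i\in[t]\setminus S}g_i+e^{\varepsilon}\sum_{j\in S}g_j}{\sum_{i\in[t]\setminus S}g'_i+e^{\varepsilon}\sum_{j\in S}g'_j}.$$ Run the following greedy procedure: let $q_i=g_i/g'_i$ (with $q_i=+\infty$ if $g'_i=0<g_i$, and $q_i$ arbitrary if $g_i=g'_i=0$); order the indices as $\pi(1),\dots,\pi(t)$ with $q_{\pi(1)}\ge q_{\pi(2)}\ge\dots\ge q_{\pi(t)}$; set $A=B=0$; for $r=1,\dots,t$ in turn, if $q_{\pi(r)}\ge\frac{1+A\lambda}{1+B\lambda}$ then replace $A$ by $A+g_{\pi(r)}$ and $B$ by $B+g'_{\pi(r)}$; finally output $\overline H^{\mathrm{alg}}=\frac{1+A\lambda}{1+B\lambda}$. Then $\overline H^{\mathrm{alg}}=\max_{S\subseteq[t]}\overline H(S)$.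
   Context: $[t]=\{1,\dots,t\}$. In the application, $G=(p(a_1\mid x),\dots,p(a_t\mid x))$ and $G'=(p(a_1\mid x'),\dots,p(a_t\mid x'))$ are conditional distributions of an attribute $\hat X$ with alphabet $\{a_1,\dots,a_t\}$ given two values $x,x'$ of another attribute $X_k$. *)

theory Defs
  imports "HOL-Analysis.Analysis"
begin

definition Hbar :: "real \<Rightarrow> nat \<Rightarrow> (nat \<Rightarrow> real) \<Rightarrow> (nat \<Rightarrow> real) \<Rightarrow> nat set \<Rightarrow> real" where
  "Hbar \<epsilon> t g g' S =
     ((\<Sum>i\<in>{1..t} - S. g i) + exp \<epsilon> * (\<Sum>j\<in>S. g j)) /
     ((\<Sum>i\<in>{1..t} - S. g' i) + exp \<epsilon> * (\<Sum>j\<in>S. g' j))"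

fun greedy_state :: "real \<Rightarrow> (nat \<Rightarrow> real) \<Rightarrow> (nat \<Rightarrow> real) \<Rightarrow> (nat \<Rightarrow> ereal)
                      \<Rightarrow> (nat \<Rightarrow> nat) \<Rightarrow> nat \<Rightarrow> real \<times> real" where
  "greedy_state lam g g' q \<pi> 0 = (0, 0)"
| "greedy_state lam g g' q \<pi> (Suc r) =
     (let (A, B) = greedy_state lam g g' q \<pi> r; i = \<pi> (Suc r) in
      if q i \<ge> ereal ((1 + A * lam) / (1 + B * lam)) then (A + g i, B + g' i) else (A, B))"

definition Halg :: "real \<Rightarrow> nat \<Rightarrow> (nat \<Rightarrow> real) \<Rightarrow> (nat \<Rightarrow> real) \<Rightarrow> (nat \<Rightarrow> ereal)
                     \<Rightarrow> (nat \<Rightarrow> nat) \<Rightarrow> real" where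
  "Halg \<epsilon> t g g' q \<pi> =
     (let lam = exp \<epsilon> - 1; (A, B) = greedy_state lam g g' q \<pi> t in
      (1 + A * lam) / (1 + B * lam))"

end

theory Submission
  imports Defs
begin

definition ratio :: "real \<Rightarrow> real \<times> real \<Rightarrow> real" where
  "ratio lam s = (1 + fst s * lam) / (1 + snd s * lam)"

definition acc :: "real \<Rightarrow> (nat \<Rightarrow> real) \<Rightarrow> (nat \<Rightarrow> real) \<Rightarrow> (nat \<Rightarrow> ereal)
                      \<Rightarrow> (nat \<Rightarrow> nat) \<Rightarrow> nat \<Rightarrow> bool" where
  "acc lam g g' q \<pi> j = (q (\<pi> j) \<ge> ereal (ratio lam (greedy_state lam g g' q \<pi> (j - 1))))"

lemma gs_Suc:
  "greedy_state lam g g' q \<pi> (Suc r) =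
    (if acc lam g g' q \<pi> (Suc r)
     then (fst (greedy_state lam g g' q \<pi> r) + g (\<pi> (Suc r)), snd (greedy_state lam g g' q \<pi> r) + g' (\<pi> (Suc r)))
     else greedy_state lam g g' q \<pi> r)"
  by (simp add: acc_def ratio_def Let_def split: prod.splits)

lemma step_mono:
  fixes N D lam a b :: real and qq :: ereal
  assumes D: "D > 0" and lam: "lam \<ge> 0" and a: "a \<ge> 0" and b: "b \<ge> 0"
    and qb: "b > 0 \<longrightarrow> qq = ereal (a / b)"
    and acc: "qq \<ge> ereal (N / D)"
  shows "N / D \<le> (N + lam * a) / (D + lam * b)"
proof -
  have Db: "D + lam * b > 0" using D lam b by (simp add: add_pos_nonneg)
  have key: "N * b \<le> a * D"
  proof (cases "b > 0")
    case True
    then have "N / D \<le> a / b" using qb acc by simp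
    then show ?thesis using True D by (simp add: divide_simps)
  next
    case False
    then have "b = 0" using b by simp
    then show ?thesis using a D by simp
  qed
  have "N * (D + lam * b) \<le> (N + lam * a) * D"
  proof -
    have "lam * (N * b) \<le> lam * (a * D)" using key lam by (rule mult_left_mono)
    then show ?thesis by (simp add: algebra_simps)
  qed
  then show ?thesis using D Db by (simp add: divide_simps)
qed

lemma step_upper:
  fixes N D lam a b :: real and qq :: ereal
  assumes D: "D > 0" and lam: "lam \<ge> 0" and a: "a \<ge> 0" and b: "b \<ge> 0"
    and qb: "b > 0 \<longrightarrow> qq = ereal (a / b)"
    and qi: "b = 0 \<and> a > 0 \<longrightarrow> qq = \<infinity>"
    and acc: "qq \<ge> ereal (N / D)"
  shows "ereal ((N + lam * a) / (D + lam * b)) \<le> qq"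
proof (cases "b > 0")
  case True
  have Db: "D + lam * b > 0" using D lam b by (simp add: add_pos_nonneg)
  have "N / D \<le> a / b" using True qb acc by simp
  then have key: "N * b \<le> a * D" using True D by (simp add: divide_simps)
  have "(N + lam * a) * b \<le> a * (D + lam * b)" using key by (simp add: algebra_simps)
  then have "(N + lam * a) / (D + lam * b) \<le> a / b" using True Db by (simp add: divide_simps)
  then show ?thesis using True qb by simp
next
  case False
  then have b0: "b = 0" using b by simp
  show ?thesis
  proof (cases "a > 0")
    case True then show ?thesis using qi b0 by simp
  next
    case False then have "a = 0" using a by simp
    then show ?thesis using b0 acc by simp
  qed
qed

lemma invariant:
  fixes lam :: real and t :: nat and g g' :: "nat \<Rightarrow> real"
    and q :: "nat \<Rightarrow> ereal" and \<pi> :: "nat \<Rightarrow> nat"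
  assumes lam: "lam \<ge> 0"
    and g_nonneg: "\<forall>i\<in>{1..t}. g i \<ge> 0"
    and g'_nonneg: "\<forall>i\<in>{1..t}. g' i \<ge> 0"
    and q_pos: "\<forall>i\<in>{1..t}. g' i > 0 \<longrightarrow> q i = ereal (g i / g' i)"
    and q_inf: "\<forall>i\<in>{1..t}. g' i = 0 \<and> g i > 0 \<longrightarrow> q i = \<infinity>"
    and into: "\<pi> ` {1..t} \<subseteq> {1..t}"
    and sorted: "\<forall>r\<in>{1..t}. \<forall>s\<in>{1..t}. r \<le> s \<longrightarrow> q (\<pi> s) \<le> q (\<pi> r)"
  shows "r \<le> t \<Longrightarrow>
    fst (greedy_state lam g g' q \<pi> r) = (\<Sum>j\<in>{j\<in>{1..r}. acc lam g g' q \<pi> j}. g (\<pi> j)) \<and>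
    snd (greedy_state lam g g' q \<pi> r) = (\<Sum>j\<in>{j\<in>{1..r}. acc lam g g' q \<pi> j}. g' (\<pi> j)) \<and>
    fst (greedy_state lam g g' q \<pi> r) \<ge> 0 \<and> snd (greedy_state lam g g' q \<pi> r) \<ge> 0 \<and>
    (\<forall>j\<in>{1..r}. acc lam g g' q \<pi> j \<longrightarrow> ereal (ratio lam (greedy_state lam g g' q \<pi> r)) \<le> q (\<pi> j)) \<and>
    (\<forall>j\<in>{1..r}. \<not> acc lam g g' q \<pi> j \<longrightarrow> q (\<pi> j) < ereal (ratio lam (greedy_state lam g g' q \<pi> r)))"
proof (induction r)
  case 0
  then show ?case by simp
next
  case (Suc r)
  let ?s = "greedy_state lam g g' q \<pi> r"
  let ?s' = "greedy_state lam g g' q \<pi> (Suc r)"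
  let ?A = "fst ?s" and ?B = "snd ?s"
  let ?i = "\<pi> (Suc r)"
  have IH: "?A = (\<Sum>j\<in>{j\<in>{1..r}. acc lam g g' q \<pi> j}. g (\<pi> j))"
     "?B = (\<Sum>j\<in>{j\<in>{1..r}. acc lam g g' q \<pi> j}. g' (\<pi> j))"
     "?A \<ge> 0" "?B \<ge> 0"
     "\<forall>j\<in>{1..r}. acc lam g g' q \<pi> j \<longrightarrow> ereal (ratio lam ?s) \<le> q (\<pi> j)"
     "\<forall>j\<in>{1..r}. \<not> acc lam g g' q \<pi> j \<longrightarrow> q (\<pi> j) < ereal (ratio lam ?s)"
    using Suc by auto
  have iin: "?i \<in> {1..t}" using into Suc.prems by (metis atLeastAtMost_iff image_subset_iff le_add1 plus_1_eq_Suc)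
  have a: "g ?i \<ge> 0" and b: "g' ?i \<ge> 0" using iin g_nonneg g'_nonneg by auto
  have qb: "g' ?i > 0 \<longrightarrow> q ?i = ereal (g ?i / g' ?i)" using iin q_pos by auto
  have qi: "g' ?i = 0 \<and> g ?i > 0 \<longrightarrow> q ?i = \<infinity>" using iin q_inf by auto
  have D: "1 + ?B * lam > 0" using IH(4) lam by (simp add: add_pos_nonneg)
  have setS: "{j\<in>{1..Suc r}. acc lam g g' q \<pi> j} =
     (if acc lam g g' q \<pi> (Suc r) then insert (Suc r) {j\<in>{1..r}. acc lam g g' q \<pi> j}
      else {j\<in>{1..r}. acc lam g g' q \<pi> j})"
    by (auto simp: le_Suc_eq)
  show ?case
  proof (cases "acc lam g g' q \<pi> (Suc r)")
    case True
    have s': "?s' = (?A + g ?i, ?B + g' ?i)" using True by (subst gs_Suc) simp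
    have accq: "q ?i \<ge> ereal ((1 + ?A * lam) / (1 + ?B * lam))"
      using True by (simp add: acc_def ratio_def)
    have rat': "ratio lam ?s' = ((1 + ?A * lam) + lam * g ?i) / ((1 + ?B * lam) + lam * g' ?i)"
      using s' by (simp add: ratio_def algebra_simps)
    have mono: "ratio lam ?s \<le> ratio lam ?s'"
      unfolding rat' using step_mono[OF D lam a b qb accq] by (simp add: ratio_def)
    have up: "ereal (ratio lam ?s') \<le> q ?i"
      unfolding rat' using step_upper[OF D lam a b qb qi accq] .
    have P1: "\<forall>j\<in>{1..Suc r}. acc lam g g' q \<pi> j \<longrightarrow> ereal (ratio lam ?s') \<le> q (\<pi> j)"
    proof (intro ballI impI)
      fix j assume j: "j \<in> {1..Suc r}" and aj: "acc lam g g' q \<pi> j"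
      have "q ?i \<le> q (\<pi> j)" using sorted j Suc.prems by auto
      then show "ereal (ratio lam ?s') \<le> q (\<pi> j)" using up by simp
    qed
    have P2: "\<forall>j\<in>{1..Suc r}. \<not> acc lam g g' q \<pi> j \<longrightarrow> q (\<pi> j) < ereal (ratio lam ?s')"
    proof (intro ballI impI)
      fix j assume j: "j \<in> {1..Suc r}" and aj: "\<not> acc lam g g' q \<pi> j"
      then have jr: "j \<in> {1..r}" using True by (auto simp: le_Suc_eq)
      then have "q (\<pi> j) < ereal (ratio lam ?s)" using IH(6) aj by auto
      also have "\<dots> \<le> ereal (ratio lam ?s')" using mono by simp
      finally show "q (\<pi> j) < ereal (ratio lam ?s')" .
    qed
    show ?thesis using True s' IH(1-4) a b P1 P2 unfolding setS by simp
  next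
    case False
    have s': "?s' = ?s" using False by (subst gs_Suc) simp
    have P2: "\<forall>j\<in>{1..Suc r}. \<not> acc lam g g' q \<pi> j \<longrightarrow> q (\<pi> j) < ereal (ratio lam ?s')"
    proof (intro ballI impI)
      fix j assume j: "j \<in> {1..Suc r}" and aj: "\<not> acc lam g g' q \<pi> j"
      show "q (\<pi> j) < ereal (ratio lam ?s')"
      proof (cases "j = Suc r")
        case True
        then show ?thesis using aj s' by (simp add: acc_def not_le)
      next
        case False
        then have "j \<in> {1..r}" using j by auto
        then show ?thesis using IH(6) aj s' by auto
      qed
    qed
    have P1: "\<forall>j\<in>{1..Suc r}. acc lam g g' q \<pi> j \<longrightarrow> ereal (ratio lam ?s') \<le> q (\<pi> j)"
      using IH(5) False s' by (auto simp: le_Suc_eq)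
    show ?thesis using False s' IH(1-4) P1 P2 unfolding setS by simp
  qed
qed


theorem theorem2:
  fixes \<epsilon> :: real and t :: nat and g g' :: "nat \<Rightarrow> real"
    and q :: "nat \<Rightarrow> ereal" and \<pi> :: "nat \<Rightarrow> nat"
  assumes eps: "\<epsilon> \<ge> 0"
    and g_nonneg: "\<forall>i\<in>{1..t}. g i \<ge> 0"
    and g_sum: "(\<Sum>i\<in>{1..t}. g i) = 1"
    and g'_nonneg: "\<forall>i\<in>{1..t}. g' i \<ge> 0"
    and g'_sum: "(\<Sum>i\<in>{1..t}. g' i) = 1"
    and q_pos: "\<forall>i\<in>{1..t}. g' i > 0 \<longrightarrow> q i = ereal (g i / g' i)"
    and q_inf: "\<forall>i\<in>{1..t}. g' i = 0 \<and> g i > 0 \<longrightarrow> q i = \<infinity>"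
    and perm: "bij_betw \<pi> {1..t} {1..t}"
    and sorted: "\<forall>r\<in>{1..t}. \<forall>s\<in>{1..t}. r \<le> s \<longrightarrow> q (\<pi> s) \<le> q (\<pi> r)"
  shows "Halg \<epsilon> t g g' q \<pi> = Max (Hbar \<epsilon> t g g' ` Pow {1..t})"
proof -
  define lam where "lam = exp \<epsilon> - 1"
  have lam: "lam \<ge> 0" using eps by (simp add: lam_def)
  have into: "\<pi> ` {1..t} \<subseteq> {1..t}" using perm by (simp add: bij_betw_def)
  have inj: "inj_on \<pi> {1..t}" using perm by (simp add: bij_betw_def)
  have onto: "\<pi> ` {1..t} = {1..t}" using perm by (simp add: bij_betw_def)
  define J where "J = {j\<in>{1..t}. acc lam g g' q \<pi> j}"
  define Sg where "Sg = \<pi> ` J"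
  define s where "s = greedy_state lam g g' q \<pi> t"
  define R where "R = ratio lam s"
  note inv = invariant[OF lam g_nonneg g'_nonneg q_pos q_inf into sorted, of t, OF order_refl,
      folded s_def J_def R_def]
  have JS: "J \<subseteq> {1..t}" by (auto simp: J_def)
  have injJ: "inj_on \<pi> J" using inj JS inj_on_subset by blast
  have SgS: "Sg \<subseteq> {1..t}" using into JS by (auto simp: Sg_def)
  have finSg: "finite Sg" using SgS finite_subset by blast
  have sA: "fst s = sum g Sg" using inv sum.reindex[OF injJ, of g] by (simp add: Sg_def)
  have sB: "snd s = sum g' Sg" using inv sum.reindex[OF injJ, of g'] by (simp add: Sg_def)
  have Halg_eq: "Halg \<epsilon> t g g' q \<pi> = R"
    by (simp add: Halg_def R_def ratio_def s_def lam_def[symmetric] split: prod.splits)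
  have Hb: "Hbar \<epsilon> t g g' S = (1 + lam * sum g S) / (1 + lam * sum g' S)" if S: "S \<subseteq> {1..t}" for S
  proof -
    have f: "finite S" using S finite_subset by blast
    have "(\<Sum>i\<in>{1..t} - S. g i) = 1 - sum g S" using sum_diff[OF _ S, of g] g_sum by simp
    moreover have "(\<Sum>i\<in>{1..t} - S. g' i) = 1 - sum g' S" using sum_diff[OF _ S, of g'] g'_sum by simp
    ultimately have e: "Hbar \<epsilon> t g g' S = (1 - sum g S + exp \<epsilon> * sum g S) / (1 - sum g' S + exp \<epsilon> * sum g' S)"
      unfolding Hbar_def by (simp only:)
    show ?thesis unfolding e lam_def by (simp add: algebra_simps)
  qed
  have B0: "sum g' S \<ge> 0" if "S \<subseteq> {1..t}" for S using that g'_nonneg by (intro sum_nonneg) auto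
  have Dpos: "1 + lam * sum g' S > 0" if "S \<subseteq> {1..t}" for S
    using B0[OF that] lam by (simp add: add_pos_nonneg)
  have HbSg: "Hbar \<epsilon> t g g' Sg = R"
    using Hb[OF SgS] by (simp add: R_def ratio_def sA sB mult.commute)
  define c where "c i = g i - R * g' i" for i
  have cpos: "c i \<ge> 0" if iS: "i \<in> Sg" for i
  proof -
    obtain j where j: "j \<in> J" "i = \<pi> j" using iS unfolding Sg_def by auto
    have iin: "i \<in> {1..t}" using iS SgS by blast
    have le: "ereal R \<le> q i" using inv j by (auto simp: J_def)
    show ?thesis
    proof (cases "g' i > 0")
      case True
      then have "R \<le> g i / g' i" using le q_pos iin by auto
      then show ?thesis using True by (simp add: c_def field_simps)
    next
      case False
      then have "g' i = 0" using g'_nonneg iin by force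
      then show ?thesis using g_nonneg iin by (auto simp: c_def)
    qed
  qed
  have cneg: "c i \<le> 0" if iS: "i \<in> {1..t} - Sg" for i
  proof -
    have iin: "i \<in> {1..t}" using iS by auto
    obtain j where j: "j \<in> {1..t}" "i = \<pi> j" proof -
      have "i \<in> \<pi> ` {1..t}" using onto iin by simp
      then show ?thesis using that by blast
    qed
    have "j \<notin> J" using iS j by (auto simp: Sg_def)
    then have nacc: "\<not> acc lam g g' q \<pi> j" using j by (auto simp: J_def)
    have lt: "q i < ereal R" using inv j nacc by auto
    show ?thesis
    proof (cases "g' i > 0")
      case True
      then have "g i / g' i < R" using lt q_pos iin by auto
      then show ?thesis using True by (simp add: c_def field_simps)
    next
      case False
      then have g0: "g' i = 0" using g'_nonneg iin by force
      have "\<not> g i > 0" using lt q_inf iin g0 by auto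
      then show ?thesis using g0 by (auto simp: c_def)
    qed
  qed
  have bound: "Hbar \<epsilon> t g g' S \<le> R" if S: "S \<subseteq> {1..t}" for S
  proof -
    have fS: "finite S" using S finite_subset by blast
    have "sum c S = sum c (S \<inter> Sg) + sum c (S - Sg)" using fS by (metis sum.Int_Diff)
    also have "sum c (S - Sg) \<le> 0" using S cneg by (intro sum_nonpos) auto
    also have "sum c (S \<inter> Sg) \<le> sum c Sg" using finSg cpos by (intro sum_mono2) auto
    finally have cs: "sum c S \<le> sum c Sg" by simp
    have cexp: "sum c X = sum g X - R * sum g' X" for X by (simp add: c_def sum_subtractf sum_distrib_left)
    have eqR: "1 + lam * sum g Sg = R * (1 + lam * sum g' Sg)"
      using Dpos[OF SgS] by (simp add: R_def ratio_def sA sB field_simps)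
    have "lam * sum c S \<le> lam * sum c Sg" using cs lam by (rule mult_left_mono)
    then have "1 + lam * sum g S \<le> R * (1 + lam * sum g' S)"
      using eqR unfolding cexp by (simp add: algebra_simps)
    then have "(1 + lam * sum g S) / (1 + lam * sum g' S) \<le> R" using Dpos[OF S] by (simp add: divide_simps)
    then show ?thesis using Hb[OF S] by simp
  qed
  show ?thesis
    unfolding Halg_eq
  proof (rule sym, rule Max_eqI)
    show "finite (Hbar \<epsilon> t g g' ` Pow {1..t})" by simp
    show "y \<le> R" if "y \<in> Hbar \<epsilon> t g g' ` Pow {1..t}" for y using that bound by auto
    show "R \<in> Hbar \<epsilon> t g g' ` Pow {1..t}" using HbSg SgS by force
  qed
qed

end
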